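(* There exists an absolute constant $c\in(0,1]$ such that for every sufficiently large positive integer $n$ there exist a quartic form $q(x_1,\dots,x_n)=\sum_{\alpha\in\{0,1\}^n,\,|\alpha|=4}d_\alpha x^\alpha$ with $|q(x)|\le1$ for all $x\in\{-1,1\}^n$, and pairwise commuting contractions $A_1,\dots,A_n\in L(\mathbb{R}^{2n+2})$, such that $$\Big\|\sum_{i,j,k,\ell=1}^n(T_q)_{i,j,k,\ell}A_iA_jA_kA_\ell\Big\|\ge c\sqrt n.$$
   Context: For a form $q(x)=\sum_{|\alpha|=4}d_\alpha x^\alpha$, $T_q\in\mathbb{R}^{n\times n\times n\times n}$ is the symmetric tensor $(T_q)_{i,j,k,\ell}=d_{e_i+e_j+e_k+e_\ell}/\tau(i,j,k,\ell)$, where $\tau$ is the number of distinct permutations of $(i,j,k,\ell)$. A contraction is a linear map of operator norm at most $1$; $\|\cdot\|$ denotes the operator norm. *)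

theory Defs
  imports Complex_Main "Jordan_Normal_Form.Matrix"
begin

definition eucl_vnorm :: "real vec \<Rightarrow> real" where
  "eucl_vnorm v = sqrt (\<Sum>i<dim_vec v. (v $ i)\<^sup>2)"

definition mat_op_norm :: "real mat \<Rightarrow> real" where
  "mat_op_norm A = Sup {eucl_vnorm (mult_mat_vec A v) | v. v \<in> carrier_vec (dim_col A) \<and> eucl_vnorm v \<le> 1}"

definition ml_quartic_exps :: "nat \<Rightarrow> (nat \<Rightarrow> nat) set" where
  "ml_quartic_exps n = {\<alpha>. (\<forall>m. \<alpha> m \<le> 1) \<and> (\<forall>m\<ge>n. \<alpha> m = 0) \<and> (\<Sum>m<n. \<alpha> m) = 4}"

definition qform :: "nat \<Rightarrow> ((nat \<Rightarrow> nat) \<Rightarrow> real) \<Rightarrow> (nat \<Rightarrow> real) \<Rightarrow> real" where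
  "qform n d x = (\<Sum>\<alpha>\<in>ml_quartic_exps n. d \<alpha> * (\<Prod>m<n. x m ^ \<alpha> m))"

definition tau4 :: "nat \<Rightarrow> nat \<Rightarrow> nat \<Rightarrow> nat \<Rightarrow> nat" where
  "tau4 i j k l = card {xs. mset xs = mset [i, j, k, l]}"

definition Tq :: "((nat \<Rightarrow> nat) \<Rightarrow> real) \<Rightarrow> nat \<Rightarrow> nat \<Rightarrow> nat \<Rightarrow> nat \<Rightarrow> real" where
  "Tq d i j k l = d (\<lambda>m. count (mset [i, j, k, l]) m) / real (tau4 i j k l)"

definition tensor_eval :: "nat \<Rightarrow> nat \<Rightarrow> ((nat \<Rightarrow> nat) \<Rightarrow> real) \<Rightarrow> (nat \<Rightarrow> real mat) \<Rightarrow> real mat" where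
  "tensor_eval N n d A = mat N N (\<lambda>(r, s).
     \<Sum>i<n. \<Sum>j<n. \<Sum>k<n. \<Sum>l<n. Tq d i j k l * ((A i * A j * A k * A l) $$ (r, s)))"

end

theory Submission
  imports Defs "HOL-Combinatorics.Multiset_Permutations"
begin
lemma exp_pm_le:
  fixes l :: real assumes "0 \<le> l" "l \<le> 1"
  shows "exp l + exp (-l) \<le> 2 * exp (l^2)"
proof -
  have e1: "exp l \<le> 1 + l + l^2" using exp_bound assms by blast
  have "1 + l \<le> exp l" using exp_ge_add_one_self by simp
  hence "exp (-l) \<le> 1 / (1 + l)" using assms by (simp add: exp_minus divide_simps)
  also have "\<dots> \<le> 1 - l + l^2"
    using assms by (simp add: divide_simps power2_eq_square) (simp add: algebra_simps mult_nonneg_nonneg)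
  finally have "exp l + exp (-l) \<le> 2 + 2 * l^2" using e1 by simp
  also have "\<dots> \<le> 2 * exp (l^2)" using exp_ge_add_one_self[of "l^2"] by linarith
  finally show ?thesis .
qed

lemma sum_PiE_exp:
  fixes c :: "'a \<Rightarrow> real"
  assumes I: "finite I" and c: "\<And>e. e \<in> I \<Longrightarrow> c e \<in> {-1,1}"
  shows "(\<Sum>\<sigma>\<in>PiE I (\<lambda>_. {-1,1::real}). exp (l * (\<Sum>e\<in>I. \<sigma> e * c e)))
        = (exp l + exp (-l)) ^ card I"
proof -
  have "(\<Sum>\<sigma>\<in>PiE I (\<lambda>_. {-1,1::real}). exp (l * (\<Sum>e\<in>I. \<sigma> e * c e)))
      = (\<Sum>\<sigma>\<in>PiE I (\<lambda>_. {-1,1::real}). \<Prod>e\<in>I. exp (l * c e * \<sigma> e))"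
    by (intro sum.cong refl) (simp add: sum_distrib_left exp_sum[OF I] algebra_simps)
  also have "\<dots> = (\<Prod>e\<in>I. \<Sum>y\<in>{-1,1::real}. exp (l * c e * y))"
    by (rule prod_sum_PiE[symmetric]) (use I in auto)
  also have "\<dots> = (\<Prod>e\<in>I. exp l + exp (-l))"
  proof (intro prod.cong refl)
    fix e assume "e \<in> I"
    then have "c e = -1 \<or> c e = 1" using c by auto
    then show "(\<Sum>y\<in>{-1,1::real}. exp (l * c e * y)) = exp l + exp (-l)" by auto
  qed
  also have "\<dots> = (exp l + exp (-l)) ^ card I" by simp
  finally show ?thesis .
qed

lemma chernoff_one:
  fixes c :: "'a \<Rightarrow> real"
  assumes I: "finite I" and c: "\<And>e. e \<in> I \<Longrightarrow> c e \<in> {-1,1}"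
    and l: "0 \<le> l" "l \<le> 1"
  shows "real (card {\<sigma>\<in>PiE I (\<lambda>_. {-1,1::real}). (\<Sum>e\<in>I. \<sigma> e * c e) > s}) * exp (l * s)
         \<le> 2 ^ card I * exp (real (card I) * l^2)"
proof -
  let ?P = "PiE I (\<lambda>_. {-1,1::real})"
  let ?B = "{\<sigma>\<in>?P. (\<Sum>e\<in>I. \<sigma> e * c e) > s}"
  have fP: "finite ?P" using I by (intro finite_PiE) auto
  have "real (card ?B) * exp (l * s) = (\<Sum>\<sigma>\<in>?B. exp (l * s))" by simp
  also have "\<dots> \<le> (\<Sum>\<sigma>\<in>?B. exp (l * (\<Sum>e\<in>I. \<sigma> e * c e)))"
    using l by (intro sum_mono) (auto intro: mult_left_mono)
  also have "\<dots> \<le> (\<Sum>\<sigma>\<in>?P. exp (l * (\<Sum>e\<in>I. \<sigma> e * c e)))"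
    by (intro sum_mono2 fP) auto
  also have "\<dots> = (exp l + exp (-l)) ^ card I" by (rule sum_PiE_exp[OF I c])
  also have "\<dots> \<le> (2 * exp (l^2)) ^ card I"
    by (intro power_mono exp_pm_le l) (simp add: add_nonneg_nonneg)
  also have "\<dots> = 2 ^ card I * exp (real (card I) * l^2)"
    by (simp add: power_mult_distrib exp_of_nat_mult)
  finally show ?thesis .
qed

lemma chernoff_two:
  fixes c :: "'a \<Rightarrow> real"
  assumes I: "finite I" and c: "\<And>e. e \<in> I \<Longrightarrow> c e \<in> {-1,1}"
    and l: "0 \<le> l" "l \<le> 1"
  shows "real (card {\<sigma>\<in>PiE I (\<lambda>_. {-1,1::real}). \<bar>\<Sum>e\<in>I. \<sigma> e * c e\<bar> > s})
         \<le> 2 * 2 ^ card I * exp (real (card I) * l^2 - l * s)"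
proof -
  let ?P = "PiE I (\<lambda>_. {-1,1::real})"
  let ?A = "{\<sigma>\<in>?P. (\<Sum>e\<in>I. \<sigma> e * c e) > s}"
  let ?B = "{\<sigma>\<in>?P. (\<Sum>e\<in>I. \<sigma> e * (- c e)) > s}"
  let ?C = "{\<sigma>\<in>?P. \<bar>\<Sum>e\<in>I. \<sigma> e * c e\<bar> > s}"
  let ?K = "2 ^ card I * exp (real (card I) * l^2)"
  have fP: "finite ?P" using I by (intro finite_PiE) auto
  have c': "\<And>e. e \<in> I \<Longrightarrow> - c e \<in> {-1,1}" using c by force
  have neg: "(\<Sum>e\<in>I. \<sigma> e * (- c e)) = - (\<Sum>e\<in>I. \<sigma> e * c e)" for \<sigma>
    by (simp add: sum_negf[symmetric])
  have sub: "?C \<subseteq> ?A \<union> ?B"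
  proof
    fix \<sigma> assume "\<sigma> \<in> ?C"
    then show "\<sigma> \<in> ?A \<union> ?B" unfolding neg by (cases "(\<Sum>e\<in>I. \<sigma> e * c e) \<ge> 0") auto
  qed
  have "card ?C \<le> card (?A \<union> ?B)"
    using fP by (intro card_mono sub) auto
  also have "\<dots> \<le> card ?A + card ?B" by (rule card_Un_le)
  finally have "real (card ?C) \<le> real (card ?A) + real (card ?B)" by linarith
  also have "real (card ?A) \<le> ?K / exp (l * s)"
    using chernoff_one[OF I c l, where s=s] by (simp add: pos_le_divide_eq)
  also have "real (card ?B) \<le> ?K / exp (l * s)"
    using chernoff_one[OF I c' l, where s=s] by (simp add: pos_le_divide_eq)
  also have "?K / exp (l * s) + ?K / exp (l * s) = 2 * 2 ^ card I * exp (real (card I) * l^2 - l * s)"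
    by (simp add: exp_diff)
  finally show ?thesis by simp
qed

lemma chernoff_union:
  fixes c :: "'b \<Rightarrow> 'a \<Rightarrow> real"
  assumes I: "finite I" and Y: "finite Y" and c: "\<And>y e. y \<in> Y \<Longrightarrow> e \<in> I \<Longrightarrow> c y e \<in> {-1,1}"
    and l: "0 \<le> l" "l \<le> 1"
    and small: "real (card Y) * (2 * exp (real (card I) * l^2 - l * s)) < 1"
  shows "\<exists>\<sigma>\<in>PiE I (\<lambda>_. {-1,1::real}). \<forall>y\<in>Y. \<bar>\<Sum>e\<in>I. \<sigma> e * c y e\<bar> \<le> s"
proof (rule ccontr)
  let ?P = "PiE I (\<lambda>_. {-1,1::real})"
  have fP: "finite ?P" using I by (intro finite_PiE) auto
  assume "\<not> ?thesis"
  hence "?P \<subseteq> (\<Union>y\<in>Y. {\<sigma>\<in>?P. \<bar>\<Sum>e\<in>I. \<sigma> e * c y e\<bar> > s})" by force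
  hence "real (card ?P) \<le> real (card (\<Union>y\<in>Y. {\<sigma>\<in>?P. \<bar>\<Sum>e\<in>I. \<sigma> e * c y e\<bar> > s}))"
    using fP Y by (intro of_nat_mono card_mono) auto
  also have "\<dots> \<le> real (\<Sum>y\<in>Y. card {\<sigma>\<in>?P. \<bar>\<Sum>e\<in>I. \<sigma> e * c y e\<bar> > s})"
    by (intro of_nat_mono card_UN_le Y)
  also have "\<dots> \<le> (\<Sum>y\<in>Y. 2 * 2 ^ card I * exp (real (card I) * l^2 - l * s))"
    unfolding of_nat_sum by (intro sum_mono chernoff_two[OF I _ l]) (use c in auto)
  also have "\<dots> = 2 ^ card I * (real (card Y) * (2 * exp (real (card I) * l^2 - l * s)))"
    by simp
  also have "\<dots> < 2 ^ card I" using small by simp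
  also have "real (card ?P) = 2 ^ card I" using I by (simp add: card_PiE)
  finally show False by simp
qed

lemma sum_add_split: "(\<Sum>s<m+k. f s) = (\<Sum>s<m. f s) + (\<Sum>c<k. f (m+c))"
  for f :: "nat \<Rightarrow> real"
  by (induction k) (simp_all add: add.assoc)

lemma sum_split4:
  fixes f :: "nat \<Rightarrow> real"
  shows "(\<Sum>s<2*n+2. f s) = f 0 + (\<Sum>c<n. f (Suc c)) + (\<Sum>c<n. f (Suc n + c)) + f (2*n+1)"
proof -
  have e: "2*n+2 = Suc (Suc (n+n))" by simp
  have "(\<Sum>s<2*n+2. f s) = (\<Sum>s<Suc (n+n). f s) + f (2*n+1)" unfolding e by (simp add: mult_2)
  also have "(\<Sum>s<Suc (n+n). f s) = f 0 + (\<Sum>s<n+n. f (Suc s))"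
    by (rule sum.lessThan_Suc_shift)
  also have "(\<Sum>s<n+n. f (Suc s)) = (\<Sum>c<n. f (Suc c)) + (\<Sum>c<n. f (Suc n + c))"
    by (subst sum_add_split) simp
  finally show ?thesis by simp
qed

lemma sum_delta_mult:
  "finite A \<Longrightarrow> (\<Sum>c\<in>A. (if c = i then 1 else 0) * f c) = (if i \<in> A then f i else (0::real))"
proof -
  assume A: "finite A"
  have "(\<Sum>c\<in>A. (if c = i then 1 else 0) * f c) = (\<Sum>c\<in>A. (if c = i then f c else 0))"
    by (intro sum.cong) auto
  also have "\<dots> = (if i \<in> A then f i else 0)" using A by simp
  finally show ?thesis .
qed

definition ent :: "nat \<Rightarrow> (nat \<Rightarrow> nat \<Rightarrow> nat \<Rightarrow> real) \<Rightarrow> nat \<Rightarrow> nat \<Rightarrow> nat \<Rightarrow> real" where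
  "ent n t i r s = (case s of 0 \<Rightarrow> (if r = Suc i then 1 else 0)
     | Suc c \<Rightarrow> if c < n then (if n < r \<and> r \<le> 2*n then t (r - Suc n) i c else 0)
     else if r = 2*n+1 \<and> s = Suc n + i then 1 else 0)"

definition Mt :: "nat \<Rightarrow> (nat \<Rightarrow> nat \<Rightarrow> nat \<Rightarrow> real) \<Rightarrow> nat \<Rightarrow> real mat" where
  "Mt n t i = mat (2*n+2) (2*n+2) (\<lambda>(r,s). ent n t i r s)"

definition actv :: "nat \<Rightarrow> (nat \<Rightarrow> nat \<Rightarrow> nat \<Rightarrow> real) \<Rightarrow> nat \<Rightarrow> real vec \<Rightarrow> real vec" where
  "actv n t i u = vec (2*n+2) (\<lambda>r. (if r = Suc i then u$0 else 0)
      + (if n < r \<and> r \<le> 2*n then (\<Sum>c<n. t (r - Suc n) i c * u$(Suc c)) else 0)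
      + (if r = 2*n+1 then u$(Suc n + i) else 0))"

lemma Mt_carrier[simp]: "Mt n t i \<in> carrier_mat (2*n+2) (2*n+2)"
  "Mt n t i \<in> carrier_mat (Suc (Suc (2*n))) (Suc (Suc (2*n)))"
  "dim_row (Mt n t i) = Suc (Suc (2*n))" "dim_col (Mt n t i) = Suc (Suc (2*n))"
  by (simp_all add: Mt_def)

lemma Mt_act:
  assumes i: "i < n" and u: "u \<in> carrier_vec (2*n+2)"
  shows "Mt n t i *\<^sub>v u = actv n t i u"
proof (rule eq_vecI)
  show "dim_vec (Mt n t i *\<^sub>v u) = dim_vec (actv n t i u)" by (simp add: Mt_def actv_def)
  fix r assume "r < dim_vec (actv n t i u)"
  hence r: "r < 2*n+2" by (simp add: actv_def)
  have du: "dim_vec u = 2*n+2" using u by simp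
  have "(Mt n t i *\<^sub>v u) $ r = (\<Sum>s<2*n+2. ent n t i r s * u $ s)"
    using r du by (simp add: Mt_def scalar_prod_def atLeast0LessThan)
  also have "\<dots> = (if r = Suc i then u$0 else 0)
      + (\<Sum>c<n. (if n < r \<and> r \<le> 2*n then t (r - Suc n) i c else 0) * u$(Suc c))
      + (\<Sum>c<n. (if r = 2*n+1 \<and> c = i then 1 else 0) * u$(Suc n + c)) + 0"
    unfolding sum_split4 using i by (simp add: ent_def)
  also have "(\<Sum>c<n. (if r = 2*n+1 \<and> c = i then 1 else 0) * u$(Suc n + c)) = (if r = 2*n+1 then u$(Suc n + i) else 0)"
    using i by (cases "r = 2*n+1") (simp_all add: sum_delta_mult)
  also have "(\<Sum>c<n. (if n < r \<and> r \<le> 2*n then t (r - Suc n) i c else 0) * u$(Suc c))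
     = (if n < r \<and> r \<le> 2*n then (\<Sum>c<n. t (r - Suc n) i c * u$(Suc c)) else 0)"
  proof (cases "n < r \<and> r \<le> 2*n")
    case False
    then show ?thesis by (subst if_not_P, assumption)+ simp
  qed simp
  also have "(if r = Suc i then u$0 else 0) + \<dots> + (if r = 2*n+1 then u$(Suc n + i) else 0) + 0 = actv n t i u $ r"
    using r by (simp add: actv_def)
  finally show "(Mt n t i *\<^sub>v u) $ r = actv n t i u $ r" .
qed

lemma actv_carrier[simp]: "actv n t i u \<in> carrier_vec (2*n+2)" "dim_vec (actv n t i u) = 2*n+2"
  "actv n t i u \<in> carrier_vec (Suc (Suc (2*n)))"
  by (simp_all add: actv_def)

lemma actv_0[simp]: "actv n t i u $ 0 = 0"
  by (simp add: actv_def)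

lemma actv_Suc[simp]: "c < n \<Longrightarrow> actv n t i u $ (Suc c) = (if c = i then u$0 else 0)"
  by (simp add: actv_def)

lemma actv_mid[simp]: "a < n \<Longrightarrow> i < n \<Longrightarrow> actv n t i u $ (Suc (n + a)) = (\<Sum>c<n. t a i c * u$(Suc c))"
  by (simp add: actv_def)

lemma actv_top[simp]: "i < n \<Longrightarrow> actv n t i u $ (Suc (2*n)) = u$(Suc (n + i))"
  by (simp add: actv_def)

lemma actv_actv:
  assumes i: "i < n" and j: "j < n"
  shows "actv n t i (actv n t j u) = vec (2*n+2) (\<lambda>r.
     (if n < r \<and> r \<le> 2*n then t (r - Suc n) i j * u$0 else 0)
     + (if r = 2*n+1 then (\<Sum>c<n. t i j c * u$(Suc c)) else 0))"
proof (rule eq_vecI)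
  fix r assume "r < dim_vec (vec (2*n+2) (\<lambda>r.
     (if n < r \<and> r \<le> 2*n then t (r - Suc n) i j * u$0 else 0)
     + (if r = 2*n+1 then (\<Sum>c<n. t i j c * u$(Suc c)) else 0)))"
  hence r: "r < 2*n+2" by simp
  have s1: "(\<Sum>c<n. t (r - Suc n) i c * actv n t j u $ Suc c) = t (r - Suc n) i j * u$0"
  proof -
    have "(\<Sum>c<n. t (r - Suc n) i c * actv n t j u $ Suc c) = (\<Sum>c<n. (if c = j then 1 else 0) * (t (r - Suc n) i c * u$0))"
      by (intro sum.cong) auto
    also have "\<dots> = t (r - Suc n) i j * u$0" using j by (simp add: sum_delta_mult)
    finally show ?thesis .
  qed
  have s2: "actv n t j u $ (Suc n + i) = (\<Sum>c<n. t i j c * u$(Suc c))" using i j by simp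
  show "actv n t i (actv n t j u) $ r = vec (2*n+2) (\<lambda>r.
     (if n < r \<and> r \<le> 2*n then t (r - Suc n) i j * u$0 else 0)
     + (if r = 2*n+1 then (\<Sum>c<n. t i j c * u$(Suc c)) else 0)) $ r"
    using r s1 s2 by (simp add: actv_def[of n t i])
qed simp

definition tgood :: "(nat \<Rightarrow> nat \<Rightarrow> nat \<Rightarrow> real) \<Rightarrow> bool" where
  "tgood t = ((\<forall>a b c. t a b c = t b a c \<and> t a b c = t a c b) \<and> (\<forall>a b c. \<bar>t a b c\<bar> \<le> 1)
     \<and> (\<forall>a i c c'. t a i c \<noteq> 0 \<longrightarrow> t a i c' \<noteq> 0 \<longrightarrow> c = c'))"

lemma tgood_sym: "tgood t \<Longrightarrow> t a b c = t b a c" "tgood t \<Longrightarrow> t a b c = t a c b"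
  "tgood t \<Longrightarrow> t a b c = t c b a"
  unfolding tgood_def by metis+

definition Aop :: "nat \<Rightarrow> nat \<Rightarrow> (nat \<Rightarrow> nat \<Rightarrow> nat \<Rightarrow> real) \<Rightarrow> nat \<Rightarrow> real mat" where
  "Aop n w t i = (if i = w then 1\<^sub>m (2*n+2) else Mt n t i)"

lemma Aop_carrier[simp]: "Aop n w t i \<in> carrier_mat (2*n+2) (2*n+2)"
  "Aop n w t i \<in> carrier_mat (Suc (Suc (2*n))) (Suc (Suc (2*n)))"
  by (simp_all add: Aop_def)

lemma Aop_act: "i < n \<Longrightarrow> u \<in> carrier_vec (2*n+2) \<Longrightarrow>
   Aop n w t i *\<^sub>v u = (if i = w then u else actv n t i u)"
  by (simp add: Aop_def Mt_act)

lemma mat_entry_unit: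
  fixes M :: "real mat"
  assumes "M \<in> carrier_mat N N" "r < N" "s < N"
  shows "M $$ (r,s) = (M *\<^sub>v unit_vec N s) $ r"
proof -
  have "(M *\<^sub>v unit_vec N s) $ r = row M r \<bullet> unit_vec N s" using assms by simp
  also have "\<dots> = row M r $ s" using assms(3) by (rule scalar_prod_right_unit)
  also have "\<dots> = M $$ (r,s)" using assms by simp
  finally show ?thesis by simp
qed

lemma Mt_comm:
  assumes t: "tgood t" and i: "i < n" and j: "j < n"
  shows "Mt n t i * Mt n t j = Mt n t j * Mt n t i"
proof (rule eq_matI)
  fix r s assume r: "r < dim_row (Mt n t j * Mt n t i)" and s: "s < dim_col (Mt n t j * Mt n t i)"
  hence r: "r < 2*n+2" and s: "s < 2*n+2" by (simp_all add: Mt_def)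
  let ?e = "unit_vec (2*n+2) s :: real vec"
  have e: "?e \<in> carrier_vec (2*n+2)" by simp
  have "(Mt n t i * Mt n t j) $$ (r,s) = ((Mt n t i * Mt n t j) *\<^sub>v ?e) $ r"
    by (rule mat_entry_unit[of _ "2*n+2"]) (use r s in auto)
  also have "\<dots> = actv n t i (actv n t j ?e) $ r"
    using e i j by (subst assoc_mult_mat_vec[of _ "2*n+2" "2*n+2" _ "2*n+2"]) (simp_all add: Mt_act)
  also have "\<dots> = actv n t j (actv n t i ?e) $ r"
  proof -
    have sy1: "\<forall>a. t a i j = t a j i" using tgood_sym(2)[OF t] by blast
    have sy2: "\<forall>c. t i j c = t j i c" using tgood_sym(1)[OF t] by blast
    show ?thesis using r i j by (simp add: actv_actv sy1 sy2)
  qed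
  also have "\<dots> = ((Mt n t j * Mt n t i) *\<^sub>v ?e) $ r"
    using e i j by (subst assoc_mult_mat_vec[of _ "2*n+2" "2*n+2" _ "2*n+2"]) (simp_all add: Mt_act)
  also have "\<dots> = (Mt n t j * Mt n t i) $$ (r,s)"
    by (rule mat_entry_unit[of _ "2*n+2", symmetric]) (use r s in auto)
  finally show "(Mt n t i * Mt n t j) $$ (r,s) = (Mt n t j * Mt n t i) $$ (r,s)" .
qed (simp_all add: Mt_def)

lemma Aop_comm:
  assumes t: "tgood t" and i: "i < n" and j: "j < n"
  shows "Aop n w t i * Aop n w t j = Aop n w t j * Aop n w t i"
  using Mt_comm[OF t i j] by (simp add: Aop_def)

lemma row_sq:
  fixes f v :: "nat \<Rightarrow> real"
  assumes A: "finite A" and u: "\<And>c c'. f c \<noteq> 0 \<Longrightarrow> f c' \<noteq> 0 \<Longrightarrow> c = c'"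
    and b: "\<And>c. \<bar>f c\<bar> \<le> 1"
  shows "(\<Sum>c\<in>A. f c * v c)^2 \<le> (\<Sum>c\<in>A. \<bar>f c\<bar> * (v c)^2)"
    and "(\<Sum>c\<in>A. \<bar>f c\<bar>) \<le> 1"
proof -
  have "(\<Sum>c\<in>A. f c * v c)^2 \<le> (\<Sum>c\<in>A. \<bar>f c\<bar> * (v c)^2) \<and> (\<Sum>c\<in>A. \<bar>f c\<bar>) \<le> 1"
  proof (cases "\<exists>c0\<in>A. f c0 \<noteq> 0")
    case True
    then obtain c0 where c0: "c0 \<in> A" "f c0 \<noteq> 0" by blast
    have z: "\<And>c. c \<in> A - {c0} \<Longrightarrow> f c = 0" using u c0 by blast
    have s1: "(\<Sum>c\<in>A. f c * v c) = f c0 * v c0"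
      using A c0 z by (subst sum.remove[of _ c0]) auto
    have s2: "(\<Sum>c\<in>A. \<bar>f c\<bar>) = \<bar>f c0\<bar>"
      using A c0 z by (subst sum.remove[of _ c0]) auto
    have "(f c0 * v c0)^2 = (f c0)^2 * (v c0)^2" by (simp add: power_mult_distrib)
    also have "\<dots> \<le> \<bar>f c0\<bar> * (v c0)^2"
    proof (intro mult_right_mono)
      have "(f c0)^2 = \<bar>f c0\<bar> * \<bar>f c0\<bar>" by (simp add: power2_eq_square abs_mult_self_eq)
      also have "\<dots> \<le> \<bar>f c0\<bar> * 1" using b[of c0] by (intro mult_left_mono) auto
      finally show "(f c0)^2 \<le> \<bar>f c0\<bar>" by simp
    qed simp
    also have "\<dots> \<le> (\<Sum>c\<in>A. \<bar>f c\<bar> * (v c)^2)"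
      using A c0 by (intro member_le_sum) auto
    finally show ?thesis using s1 s2 b[of c0] by simp
  next
    case False
    hence "\<And>c. c \<in> A \<Longrightarrow> f c = 0" by blast
    thus ?thesis by (simp add: sum_nonneg)
  qed
  thus "(\<Sum>c\<in>A. f c * v c)^2 \<le> (\<Sum>c\<in>A. \<bar>f c\<bar> * (v c)^2)" "(\<Sum>c\<in>A. \<bar>f c\<bar>) \<le> 1" by auto
qed

lemma schur:
  fixes v :: "nat \<Rightarrow> real"
  assumes t: "tgood t"
  shows "(\<Sum>a<n. (\<Sum>c<n. t a i c * v c)^2) \<le> (\<Sum>c<n. (v c)^2)"
proof -
  have u: "\<And>a c c'. t a i c \<noteq> 0 \<Longrightarrow> t a i c' \<noteq> 0 \<Longrightarrow> c = c'" using t unfolding tgood_def by blast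
  have b: "\<And>a c. \<bar>t a i c\<bar> \<le> 1" using t unfolding tgood_def by blast
  have "(\<Sum>a<n. (\<Sum>c<n. t a i c * v c)^2) \<le> (\<Sum>a<n. (\<Sum>c<n. \<bar>t a i c\<bar> * (v c)^2))"
    by (intro sum_mono row_sq(1) u b) auto
  also have "\<dots> = (\<Sum>c<n. (v c)^2 * (\<Sum>a<n. \<bar>t c i a\<bar>))"
    by (subst sum.swap) (simp add: sum_distrib_left tgood_sym(3)[OF t, of _ i] mult.commute)
  also have "\<dots> \<le> (\<Sum>c<n. (v c)^2 * 1)"
    by (intro sum_mono mult_left_mono row_sq(2) u b) auto
  finally show ?thesis by simp
qed

lemma actv_contr:
  assumes t: "tgood t" and i: "i < n" and u: "u \<in> carrier_vec (2*n+2)"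
  shows "(\<Sum>r<2*n+2. (actv n t i u $ r)^2) \<le> (\<Sum>r<2*n+2. (u $ r)^2)"
proof -
  have e1: "(\<Sum>r<2*n+2. (actv n t i u $ r)^2) = 0 + (\<Sum>c<n. (if c = i then (u$0)^2 else 0))
      + (\<Sum>a<n. (\<Sum>c<n. t a i c * u$(Suc c))^2) + (u$(Suc (n+i)))^2"
    unfolding sum_split4 using i by (simp add: if_distrib[of "\<lambda>x. x^2"] cong: if_cong)
  have e2: "(\<Sum>c<n. (if c = i then (u$0)^2 else 0)) = (u$0)^2" using i by simp
  have e3: "(\<Sum>a<n. (\<Sum>c<n. t a i c * u$(Suc c))^2) \<le> (\<Sum>c<n. (u$(Suc c))^2)"
    by (rule schur[OF t])
  have "(u$(Suc n + i))^2 \<le> (\<Sum>c<n. (u$(Suc n + c))^2)"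
    using i by (intro member_le_sum[where f="\<lambda>c. (u$(Suc n + c))^2"]) auto
  hence e4: "(u$(Suc (n + i)))^2 \<le> (\<Sum>c<n. (u$(Suc n + c))^2)" by simp
  have e5: "(\<Sum>r<2*n+2. (u $ r)^2) = (u$0)^2 + (\<Sum>c<n. (u$(Suc c))^2) + (\<Sum>c<n. (u$(Suc n + c))^2) + (u$(2*n+1))^2"
    by (rule sum_split4)
  have "0 \<le> (u$(2*n+1))^2" by simp
  then show ?thesis using e1 e2 e3 e4 e5 by linarith
qed

lemma sum_delta_mult2[simp]:
  "finite A \<Longrightarrow> (\<Sum>c\<in>A. f c * (if c = i then x else 0)) = (if i \<in> A then f i * x else (0::real))"
proof -
  assume A: "finite A"
  have "(\<Sum>c\<in>A. f c * (if c = i then x else 0)) = (\<Sum>c\<in>A. (if c = i then f c * x else 0))"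
    by (intro sum.cong) auto
  also have "\<dots> = (if i \<in> A then f i * x else 0)" using A by simp
  finally show ?thesis .
qed

definition L0 :: "nat \<Rightarrow> real \<Rightarrow> real vec" where "L0 n c = vec (2*n+2) (\<lambda>r. if r = 0 then c else 0)"
definition L1 :: "nat \<Rightarrow> (nat \<Rightarrow> real) \<Rightarrow> real vec" where
  "L1 n f = vec (2*n+2) (\<lambda>r. if r \<noteq> 0 \<and> r \<le> n then f (r - 1) else 0)"
definition L2 :: "nat \<Rightarrow> (nat \<Rightarrow> real) \<Rightarrow> real vec" where
  "L2 n g = vec (2*n+2) (\<lambda>r. if n < r \<and> r \<le> 2*n then g (r - Suc n) else 0)"
definition L3 :: "nat \<Rightarrow> real \<Rightarrow> real vec" where "L3 n c = vec (2*n+2) (\<lambda>r. if r = 2*n+1 then c else 0)"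

lemma L_carrier[simp]: "L0 n c \<in> carrier_vec (2*n+2)" "L1 n f \<in> carrier_vec (2*n+2)"
  "L2 n g \<in> carrier_vec (2*n+2)" "L3 n c \<in> carrier_vec (2*n+2)"
  "L0 n c \<in> carrier_vec (Suc (Suc (2*n)))" "L1 n f \<in> carrier_vec (Suc (Suc (2*n)))"
  "L2 n g \<in> carrier_vec (Suc (Suc (2*n)))" "L3 n c \<in> carrier_vec (Suc (Suc (2*n)))"
  by (simp_all add: L0_def L1_def L2_def L3_def)

lemma L_top[simp]: "L0 n c $ (2*n+1) = 0" "L1 n f $ (2*n+1) = 0" "L2 n g $ (2*n+1) = 0" "L3 n c $ (2*n+1) = c"
  "L0 n c $ Suc (2*n) = 0" "L1 n f $ Suc (2*n) = 0" "L2 n g $ Suc (2*n) = 0" "L3 n c $ Suc (2*n) = c"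
  by (simp_all add: L0_def L1_def L2_def L3_def)

lemma unit0_L0: "unit_vec (2*n+2) 0 = L0 n 1"
  by (auto simp: L0_def unit_vec_def)

lemma actv_L0: "i < n \<Longrightarrow> actv n t i (L0 n c) = L1 n (\<lambda>m. if m = i then c else 0)"
  by (rule eq_vecI) (auto simp: actv_def L0_def L1_def)

lemma actv_L1: "i < n \<Longrightarrow> actv n t i (L1 n f) = L2 n (\<lambda>a. \<Sum>c<n. t a i c * f c)"
  by (rule eq_vecI) (auto simp: actv_def L1_def L2_def intro!: sum.cong)

lemma actv_L2: "i < n \<Longrightarrow> actv n t i (L2 n g) = L3 n (g i)"
  by (rule eq_vecI) (auto simp: actv_def L2_def L3_def)

lemma actv_L3: "i < n \<Longrightarrow> actv n t i (L3 n c) = L0 n 0"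
  by (rule eq_vecI) (auto simp: actv_def L3_def L0_def)

lemma Aop_L:
  assumes "i < n"
  shows "Aop n w t i *\<^sub>v L0 n c = (if i = w then L0 n c else L1 n (\<lambda>m. if m = i then c else 0))"
    "Aop n w t i *\<^sub>v L1 n f = (if i = w then L1 n f else L2 n (\<lambda>a. \<Sum>c<n. t a i c * f c))"
    "Aop n w t i *\<^sub>v L2 n g = (if i = w then L2 n g else L3 n (g i))"
    "Aop n w t i *\<^sub>v L3 n c = (if i = w then L3 n c else L0 n 0)"
  using assms by (simp_all add: Aop_act[of i n] actv_L0 actv_L1 actv_L2 actv_L3)

lemma E_formula:
  assumes t: "tgood t" and tw: "\<And>b c. t w b c = 0"
    and i: "i < n" and j: "j < n" and k: "k < n" and l: "l < n"
  shows "(Aop n w t i *\<^sub>v (Aop n w t j *\<^sub>v (Aop n w t k *\<^sub>v (Aop n w t l *\<^sub>v unit_vec (2*n+2) 0)))) $ (2*n+1)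
    = (if i = w then t j k l else 0) + (if j = w then t i k l else 0)
      + (if k = w then t i j l else 0) + (if l = w then t i j k else 0)"
proof -
  have tw2: "t a w c = 0" for a c using tw tgood_sym(1)[OF t, of a w c] by simp
  have tw3: "t a b w = 0" for a b using tw tgood_sym(3)[OF t, of a b w] by simp
  show ?thesis
    unfolding unit0_L0 using i j k l
    by (cases "i = w"; cases "j = w"; cases "k = w"; cases "l = w")
       (simp_all add: Aop_L tw tw2 tw3)
qed

lemma evnorm_comp: "r < dim_vec v \<Longrightarrow> \<bar>v $ r\<bar> \<le> eucl_vnorm v"
proof -
  assume r: "r < dim_vec v"
  have "(v $ r)^2 \<le> (\<Sum>i<dim_vec v. (v $ i)^2)"
    using r by (intro member_le_sum[where f="\<lambda>i. (v $ i)^2"]) auto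
  hence "sqrt ((v $ r)^2) \<le> eucl_vnorm v" unfolding eucl_vnorm_def by (rule real_sqrt_le_mono)
  thus ?thesis by simp
qed

lemma evnorm_nonneg: "0 \<le> eucl_vnorm v"
  unfolding eucl_vnorm_def by (intro real_sqrt_ge_zero sum_nonneg) auto

lemma opnorm_bdd: "bdd_above {eucl_vnorm (mult_mat_vec A v) | v. v \<in> carrier_vec (dim_col A) \<and> eucl_vnorm v \<le> 1}"
proof -
  define K where "K r = (\<Sum>s<dim_col A. \<bar>A $$ (r,s)\<bar>)" for r
  have K0: "0 \<le> K r" for r unfolding K_def by (intro sum_nonneg) auto
  have "eucl_vnorm (A *\<^sub>v v) \<le> sqrt (\<Sum>r<dim_row A. (K r)^2)"
    if v: "v \<in> carrier_vec (dim_col A)" "eucl_vnorm v \<le> 1" for v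
  proof -
    have "((A *\<^sub>v v) $ r)^2 \<le> (K r)^2" if r: "r < dim_row A" for r
    proof -
      have "(A *\<^sub>v v) $ r = (\<Sum>s<dim_col A. A $$ (r,s) * v $ s)"
        using r v by (simp add: scalar_prod_def atLeast0LessThan)
      also have "\<bar>\<dots>\<bar> \<le> (\<Sum>s<dim_col A. \<bar>A $$ (r,s) * v $ s\<bar>)" by (rule sum_abs)
      also have "\<dots> \<le> (\<Sum>s<dim_col A. \<bar>A $$ (r,s)\<bar> * 1)"
      proof (intro sum_mono)
        fix s assume "s \<in> {..<dim_col A}"
        hence "\<bar>v $ s\<bar> \<le> 1" using evnorm_comp[of s v] v by auto
        thus "\<bar>A $$ (r,s) * v $ s\<bar> \<le> \<bar>A $$ (r,s)\<bar> * 1"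
          using mult_left_mono[of "\<bar>v $ s\<bar>" 1 "\<bar>A $$ (r,s)\<bar>"] by (simp add: abs_mult)
      qed
      finally have "\<bar>(A *\<^sub>v v) $ r\<bar> \<le> \<bar>K r\<bar>" using K0[of r] by (simp add: K_def)
      thus ?thesis by (simp add: abs_le_square_iff)
    qed
    hence "(\<Sum>r<dim_row A. ((A *\<^sub>v v) $ r)^2) \<le> (\<Sum>r<dim_row A. (K r)^2)" by (intro sum_mono) auto
    thus ?thesis unfolding eucl_vnorm_def by (simp add: real_sqrt_le_mono)
  qed
  thus ?thesis unfolding bdd_above_def by blast
qed

lemma opnorm_ge_vec:
  assumes "v \<in> carrier_vec (dim_col A)" "eucl_vnorm v \<le> 1"
  shows "eucl_vnorm (A *\<^sub>v v) \<le> mat_op_norm A"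
  unfolding mat_op_norm_def by (rule cSup_upper[OF _ opnorm_bdd]) (use assms in blast)

lemma opnorm_le1:
  fixes A :: "real mat"
  assumes "\<And>v :: real vec. v \<in> carrier_vec (dim_col A) \<Longrightarrow> eucl_vnorm (A *\<^sub>v v) \<le> eucl_vnorm v"
  shows "mat_op_norm A \<le> 1"
  unfolding mat_op_norm_def
proof (rule cSup_least)
  have "eucl_vnorm (0\<^sub>v (dim_col A) :: real vec) = 0" by (simp add: eucl_vnorm_def)
  thus "{eucl_vnorm (A *\<^sub>v v) |v. v \<in> carrier_vec (dim_col A) \<and> eucl_vnorm v \<le> 1} \<noteq> {}"
    by (intro notI) (metis (mono_tags, lifting) empty_iff mem_Collect_eq order_refl zero_carrier_vec zero_le_one)
  fix x assume "x \<in> {eucl_vnorm (A *\<^sub>v v) |v. v \<in> carrier_vec (dim_col A) \<and> eucl_vnorm v \<le> 1}"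
  then obtain v where "x = eucl_vnorm (A *\<^sub>v v)" "v \<in> carrier_vec (dim_col A)" "eucl_vnorm v \<le> 1" by blast
  thus "x \<le> 1" using assms by force
qed

lemma Aop_norm:
  assumes t: "tgood t" and i: "i < n"
  shows "mat_op_norm (Aop n w t i) \<le> 1"
proof (rule opnorm_le1)
  fix v :: "real vec" assume "v \<in> carrier_vec (dim_col (Aop n w t i))"
  hence v: "v \<in> carrier_vec (2*n+2)" by (cases "i = w") (simp_all add: Aop_def Mt_def)
  show "eucl_vnorm (Aop n w t i *\<^sub>v v) \<le> eucl_vnorm v"
  proof (cases "i = w")
    case True thus ?thesis using v by (simp add: Aop_def)
  next
    case False
    hence "Aop n w t i *\<^sub>v v = actv n t i v" using i v by (simp add: Aop_act)
    moreover have "dim_vec v = 2*n+2" using v by simp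
    ultimately show ?thesis unfolding eucl_vnorm_def
      using actv_contr[OF t i v] by (simp add: real_sqrt_le_mono)
  qed
qed

definition trip :: "nat \<Rightarrow> nat \<times> nat \<Rightarrow> nat set" where
  "trip p e = {fst e, p + snd e, 2*p + fst e + snd e}"

definition tt :: "nat \<Rightarrow> (nat \<times> nat \<Rightarrow> real) \<Rightarrow> nat \<Rightarrow> nat \<Rightarrow> nat \<Rightarrow> real" where
  "tt p \<sigma> i j k = (\<Sum>e\<in>{..<p}\<times>{..<p}. if {i,j,k} = trip p e then \<sigma> e else 0)"

lemma trip_aux1:
  fixes x y a b a' b' p :: nat
  assumes c1: "(x < p \<and> x = a) \<or> (p \<le> x \<and> x < 2*p \<and> x = p+b) \<or> (2*p \<le> x \<and> x = 2*p+a+b)"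
  and c3: "(x < p \<and> x = a') \<or> (p \<le> x \<and> x < 2*p \<and> x = p+b') \<or> (2*p \<le> x \<and> x = 2*p+a'+b')"
  shows "(x < p \<and> a = a') \<or> (p \<le> x \<and> x < 2*p \<and> b = b') \<or> (2*p \<le> x \<and> a+b = a'+b')"
  using c1 c3 by auto
lemma trip_aux2:
  fixes x y a b a' b' p :: nat
  assumes c1: "(x < p \<and> x = a) \<or> (p \<le> x \<and> x < 2*p \<and> x = p+b) \<or> (2*p \<le> x \<and> x = 2*p+a+b)"
  and c2: "(y < p \<and> y = a) \<or> (p \<le> y \<and> y < 2*p \<and> y = p+b) \<or> (2*p \<le> y \<and> y = 2*p+a+b)"
  and xa: "(x < p \<and> a = a') \<or> (p \<le> x \<and> x < 2*p \<and> b = b') \<or> (2*p \<le> x \<and> a+b = a'+b')"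
  and ya: "(y < p \<and> a = a') \<or> (p \<le> y \<and> y < 2*p \<and> b = b') \<or> (2*p \<le> y \<and> a+b = a'+b')"
  and xy: "x \<noteq> y"
  shows "a = a' \<and> b = b'"
  using c1 c2 xa ya xy by auto

lemma trip_cls:
  assumes "a < p" "b < p" "u \<in> trip p (a,b)"
  shows "(u < p \<and> u = a) \<or> (p \<le> u \<and> u < 2*p \<and> u = p+b) \<or> (2*p \<le> u \<and> u = 2*p+a+b)"
  using assms unfolding trip_def by auto

lemma trip_two:
  assumes e: "e \<in> {..<p}\<times>{..<p}" and e': "e' \<in> {..<p}\<times>{..<p}"
    and xy: "x \<noteq> y" "x \<in> trip p e" "y \<in> trip p e" "x \<in> trip p e'" "y \<in> trip p e'"
  shows "e = e'"
proof -
  obtain a b where ab: "e = (a,b)" "a < p" "b < p" using e by auto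
  obtain a' b' where ab': "e' = (a',b')" "a' < p" "b' < p" using e' by auto
  have c1: "(x < p \<and> x = a) \<or> (p \<le> x \<and> x < 2*p \<and> x = p+b) \<or> (2*p \<le> x \<and> x = 2*p+a+b)"
    using trip_cls[OF ab(2,3)] xy(2) ab(1) by blast
  have c2: "(y < p \<and> y = a) \<or> (p \<le> y \<and> y < 2*p \<and> y = p+b) \<or> (2*p \<le> y \<and> y = 2*p+a+b)"
    using trip_cls[OF ab(2,3)] xy(3) ab(1) by blast
  have c3: "(x < p \<and> x = a') \<or> (p \<le> x \<and> x < 2*p \<and> x = p+b') \<or> (2*p \<le> x \<and> x = 2*p+a'+b')"
    using trip_cls[OF ab'(2,3)] xy(4) ab'(1) by blast
  have c4: "(y < p \<and> y = a') \<or> (p \<le> y \<and> y < 2*p \<and> y = p+b') \<or> (2*p \<le> y \<and> y = 2*p+a'+b')"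
    using trip_cls[OF ab'(2,3)] xy(5) ab'(1) by blast
  have "a = a' \<and> b = b'"
    by (rule trip_aux2[OF c1 c2 trip_aux1[OF c1 c3] trip_aux1[OF c2 c4] xy(1)])
  thus ?thesis using ab ab' by simp
qed

lemma trip_distinct:
  assumes e: "e \<in> {..<p}\<times>{..<p}" and eq: "{i,j,k} = trip p e"
  shows "i \<noteq> j" "i \<noteq> k" "j \<noteq> k"
proof -
  obtain a b where ab: "e = (a,b)" "a < p" "b < p" using e by auto
  have m: "a \<in> {i,j,k}" "p + b \<in> {i,j,k}" "2*p+a+b \<in> {i,j,k}" using eq ab unfolding trip_def by auto
  have d: "a \<noteq> p + b" "a \<noteq> 2*p+a+b" "p + b \<noteq> 2*p+a+b" using ab by auto
  show "i \<noteq> j" using m d by auto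
  show "i \<noteq> k" using m d by auto
  show "j \<noteq> k" using m d by auto
qed

lemma tt_eq:
  assumes e: "e \<in> {..<p}\<times>{..<p}" and eq: "{i,j,k} = trip p e"
  shows "tt p \<sigma> i j k = \<sigma> e"
proof -
  have "tt p \<sigma> i j k = (\<Sum>e'\<in>{..<p}\<times>{..<p}. if e' = e then \<sigma> e' else 0)"
    unfolding tt_def
  proof (intro sum.cong refl)
    fix e' assume e': "e' \<in> {..<p}\<times>{..<p}"
    have "{i,j,k} = trip p e' \<longleftrightarrow> e' = e"
    proof
      assume h: "{i,j,k} = trip p e'"
      have "i \<noteq> j" using trip_distinct[OF e eq] by auto
      moreover have "i \<in> trip p e" "j \<in> trip p e" "i \<in> trip p e'" "j \<in> trip p e'" using eq h by auto
      ultimately show "e' = e" using trip_two[OF e e'] by metis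
    qed (use eq in auto)
    thus "(if {i,j,k} = trip p e' then \<sigma> e' else 0) = (if e' = e then \<sigma> e' else 0)" by simp
  qed
  also have "\<dots> = \<sigma> e" using e by simp
  finally show ?thesis .
qed

lemma tt_zero:
  assumes "\<not> (\<exists>e\<in>{..<p}\<times>{..<p}. {i,j,k} = trip p e)"
  shows "tt p \<sigma> i j k = 0"
  unfolding tt_def using assms by (intro sum.neutral) auto

lemma tt_nz: "tt p \<sigma> i j k \<noteq> 0 \<Longrightarrow> \<exists>e\<in>{..<p}\<times>{..<p}. {i,j,k} = trip p e"
  using tt_zero by blast

lemma tt_good:
  assumes \<sigma>: "\<And>e. e \<in> {..<p}\<times>{..<p} \<Longrightarrow> \<sigma> e \<in> {-1,1}"
  shows "tgood (tt p \<sigma>)"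
  unfolding tgood_def
proof (intro conjI allI impI)
  fix a b c
  show "tt p \<sigma> a b c = tt p \<sigma> b a c" unfolding tt_def by (simp add: insert_commute)
  show "tt p \<sigma> a b c = tt p \<sigma> a c b" unfolding tt_def by (simp add: insert_commute)
  show "\<bar>tt p \<sigma> a b c\<bar> \<le> 1"
  proof (cases "\<exists>e\<in>{..<p}\<times>{..<p}. {a,b,c} = trip p e")
    case True
    then obtain e where "e\<in>{..<p}\<times>{..<p}" "{a,b,c} = trip p e" by blast
    thus ?thesis using tt_eq[of e p a b c \<sigma>] \<sigma>[of e] by auto
  qed (simp add: tt_zero)
next
  fix a i c c' assume h: "tt p \<sigma> a i c \<noteq> 0" "tt p \<sigma> a i c' \<noteq> 0"
  obtain e where e: "e\<in>{..<p}\<times>{..<p}" "{a,i,c} = trip p e" using tt_nz[OF h(1)] by blast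
  obtain e' where e': "e'\<in>{..<p}\<times>{..<p}" "{a,i,c'} = trip p e'" using tt_nz[OF h(2)] by blast
  have d: "a \<noteq> i" "a \<noteq> c" "i \<noteq> c" using trip_distinct[OF e] by auto
  have "e = e'" using trip_two[OF e(1) e'(1) d(1)] e(2) e'(2) by auto
  hence "{a,i,c} = {a,i,c'}" using e e' by simp
  thus "c = c'" using d by auto
qed

lemma tt_w:
  assumes p: "1 \<le> p"
  shows "tt p \<sigma> (4*p-1) b c = 0"
proof (rule tt_zero)
  show "\<not> (\<exists>e\<in>{..<p}\<times>{..<p}. {4*p-1,b,c} = trip p e)"
  proof
    assume "\<exists>e\<in>{..<p}\<times>{..<p}. {4*p-1,b,c} = trip p e"
    then obtain a b' where "a < p" "b' < p" "4*p-1 \<in> trip p (a,b')" by auto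
    thus False unfolding trip_def by auto
  qed
qed

lemma prod_count_mset:
  fixes x :: "nat \<Rightarrow> real"
  shows "set xs \<subseteq> {..<n} \<Longrightarrow> (\<Prod>m<n. x m ^ count (mset xs) m) = prod_list (map x xs)"
proof (induction xs)
  case Nil thus ?case by simp
next
  case (Cons a xs)
  have a: "a < n" using Cons.prems by auto
  have "(\<Prod>m<n. x m ^ count (mset (a # xs)) m) = (\<Prod>m<n. x m ^ count (mset xs) m * (if m = a then x m else 1))"
    by (intro prod.cong refl) auto
  also have "\<dots> = (\<Prod>m<n. x m ^ count (mset xs) m) * (\<Prod>m<n. (if m = a then x m else 1))"
    by (rule prod.distrib)
  also have "(\<Prod>m<n. (if m = a then x m else 1)) = x a" using a by simp
  finally show ?case using Cons by (simp add: mult.commute)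
qed

lemma tau4_distinct:
  assumes "distinct [i,j,k,l]"
  shows "tau4 i j k l = 24"
proof -
  have "{xs. mset xs = mset [i,j,k,l]} = permutations_of_set {i,j,k,l}"
    using assms by (simp add: permutations_of_set_altdef permutations_of_multiset_def mset_set_set[symmetric, of "[i,j,k,l]"])
  moreover have "card {i,j,k,l} = 4" using assms by simp
  ultimately show ?thesis unfolding tau4_def by (simp add: fact_numeral)
qed

lemma Tq_mset:
  "mset [i,j,k,l] = mset [i',j',k',l'] \<Longrightarrow> Tq d i j k l = Tq d i' j' k' l'"
  unfolding Tq_def tau4_def by simp

definition cntl :: "nat \<Rightarrow> nat \<times> nat \<Rightarrow> nat list" where
  "cntl p e = [4*p-1, fst e, p + snd e, 2*p + fst e + snd e]"

definition dd :: "nat \<Rightarrow> (nat \<times> nat \<Rightarrow> real) \<Rightarrow> real \<Rightarrow> (nat \<Rightarrow> nat) \<Rightarrow> real" where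
  "dd p \<sigma> s \<alpha> = (\<Sum>e\<in>{..<p}\<times>{..<p}. if \<alpha> = count (mset (cntl p e)) then \<sigma> e / s else 0)"

lemma cntl_props:
  assumes e: "e \<in> {..<p}\<times>{..<p}"
  shows "distinct (cntl p e)" "set (cntl p e) = insert (4*p-1) (trip p e)" "4*p-1 \<notin> trip p e"
proof -
  obtain a b where ab: "e = (a,b)" "a < p" "b < p" using e by auto
  show "distinct (cntl p e)" "set (cntl p e) = insert (4*p-1) (trip p e)" "4*p-1 \<notin> trip p e"
    using ab by (auto simp: cntl_def trip_def)
qed

lemma cntl_sub:
  assumes e: "e \<in> {..<p}\<times>{..<p}" and n: "4*p \<le> n"
  shows "set (cntl p e) \<subseteq> {..<n}"
proof -
  obtain a b where ab: "e = (a,b)" "a < p" "b < p" using e by auto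
  show ?thesis using ab n by (auto simp: cntl_def)
qed

lemma cnt_exps:
  assumes e: "e \<in> {..<p}\<times>{..<p}" and n: "4*p \<le> n"
  shows "count (mset (cntl p e)) \<in> ml_quartic_exps n"
proof -
  have d: "distinct (cntl p e)" using cntl_props[OF e] by simp
  have sub: "set (cntl p e) \<subseteq> {..<n}" by (rule cntl_sub[OF e n])
  have c: "count (mset (cntl p e)) m = (if m \<in> set (cntl p e) then 1 else 0)" for m
    using d distinct_count_atmost_1 by metis
  have "(\<Sum>m<n. count (mset (cntl p e)) m) = (\<Sum>m<n. if m \<in> set (cntl p e) then 1 else 0)"
    using c by simp
  also have "\<dots> = card ({..<n} \<inter> set (cntl p e))"
    by (simp add: sum.inter_restrict[symmetric])
  also have "{..<n} \<inter> set (cntl p e) = set (cntl p e)" using sub by blast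
  also have "card (set (cntl p e)) = 4" using d by (simp add: distinct_card cntl_def)
  finally have s4: "(\<Sum>m<n. count (mset (cntl p e)) m) = 4" .
  show ?thesis unfolding ml_quartic_exps_def using c sub s4 by auto
qed

lemma cnt_inj:
  assumes e: "e \<in> {..<p}\<times>{..<p}" and e': "e' \<in> {..<p}\<times>{..<p}"
    and eq: "count (mset (cntl p e)) = count (mset (cntl p e'))"
  shows "e = e'"
proof -
  have "mset (cntl p e) = mset (cntl p e')" using eq by (simp add: multiset_eqI)
  hence "set (cntl p e) = set (cntl p e')" by (metis set_mset_mset)
  hence "insert (4*p-1) (trip p e) = insert (4*p-1) (trip p e')" using cntl_props[OF e] cntl_props[OF e'] by simp
  hence tt: "trip p e = trip p e'" using cntl_props(3)[OF e] cntl_props(3)[OF e'] insert_ident by metis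
  obtain a b where ab: "e = (a,b)" "a < p" "b < p" using e by auto
  have "a \<noteq> p + b" "a \<in> trip p e" "p + b \<in> trip p e" using ab by (auto simp: trip_def)
  thus ?thesis using trip_two[OF e e'] tt by metis
qed

lemma dd_cnt:
  assumes e: "e \<in> {..<p}\<times>{..<p}"
  shows "dd p \<sigma> s (count (mset (cntl p e))) = \<sigma> e / s"
proof -
  have "dd p \<sigma> s (count (mset (cntl p e))) = (\<Sum>e'\<in>{..<p}\<times>{..<p}. if e' = e then \<sigma> e' / s else 0)"
    unfolding dd_def
    by (intro sum.cong refl) (use cnt_inj[OF e] in auto)
  also have "\<dots> = \<sigma> e / s" using e by simp
  finally show ?thesis .
qed

lemma dd_out:
  assumes n: "4*p \<le> n" and a: "\<alpha> \<notin> ml_quartic_exps n"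
  shows "dd p \<sigma> s \<alpha> = 0"
  unfolding dd_def using cnt_exps[OF _ n] a by (intro sum.neutral) auto

lemma finite_exps: "finite (ml_quartic_exps n)"
proof (rule finite_subset)
  show "ml_quartic_exps n \<subseteq> {f. \<forall>x. (x \<in> {..<n} \<longrightarrow> f x \<in> {0,1}) \<and> (x \<notin> {..<n} \<longrightarrow> f x = 0)}"
    unfolding ml_quartic_exps_def by (auto simp: le_Suc_eq)
  show "finite {f. \<forall>x. (x \<in> {..<n} \<longrightarrow> f x \<in> {0::nat,1}) \<and> (x \<notin> {..<n} \<longrightarrow> f x = 0)}"
    by (rule finite_set_of_finite_funs) auto
qed

lemma qform_dd:
  assumes n: "4*p \<le> n"
  shows "qform n (dd p \<sigma> s) x = (\<Sum>e\<in>{..<p}\<times>{..<p}. \<sigma> e / s * prod_list (map x (cntl p e)))"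
proof -
  let ?I = "{..<p}\<times>{..<p}"
  let ?P = "\<lambda>\<alpha>. (\<Prod>m<n. x m ^ \<alpha> m)"
  have "qform n (dd p \<sigma> s) x = (\<Sum>\<alpha>\<in>ml_quartic_exps n. \<Sum>e\<in>?I. (if \<alpha> = count (mset (cntl p e)) then \<sigma> e / s * ?P \<alpha> else 0))"
    unfolding qform_def dd_def by (simp add: sum_distrib_right if_distrib[of "\<lambda>y. y * _"] cong: if_cong)
  also have "\<dots> = (\<Sum>e\<in>?I. \<Sum>\<alpha>\<in>ml_quartic_exps n. (if \<alpha> = count (mset (cntl p e)) then \<sigma> e / s * ?P \<alpha> else 0))"
    by (rule sum.swap)
  also have "\<dots> = (\<Sum>e\<in>?I. \<sigma> e / s * ?P (count (mset (cntl p e))))"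
    using cnt_exps[OF _ n] finite_exps by (intro sum.cong refl) (simp add: sum.delta)
  also have "\<dots> = (\<Sum>e\<in>?I. \<sigma> e / s * prod_list (map x (cntl p e)))"
    using cntl_sub[OF _ n] by (intro sum.cong refl) (simp add: prod_count_mset)
  finally show ?thesis .
qed

lemma Tq_dd:
  assumes e: "e \<in> {..<p}\<times>{..<p}"
  shows "Tq (dd p \<sigma> s) (4*p-1) (fst e) (p + snd e) (2*p + fst e + snd e) = \<sigma> e / s / 24"
proof -
  have d: "distinct [4*p-1, fst e, p + snd e, 2*p + fst e + snd e]" using cntl_props(1)[OF e] by (simp add: cntl_def)
  show ?thesis unfolding Tq_def using tau4_distinct[OF d] dd_cnt[OF e, of \<sigma> s] by (simp add: cntl_def)
qed

lemma mult_if_helper: "c * (if P then a else 0) = (if P then a * c else (0::real))"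
  by simp

lemma set3_iff:
  assumes "x \<noteq> y" "x \<noteq> z" "y \<noteq> z"
  shows "({j,k,l} = {x,y,z}) \<longleftrightarrow> (j,k,l) \<in> {(x,y,z),(x,z,y),(y,x,z),(y,z,x),(z,x,y),(z,y,x)}"
proof
  assume h: "{j,k,l} = {x,y,z}"
  have "x \<in> {j,k,l}" "y \<in> {j,k,l}" "z \<in> {j,k,l}" using h by auto
  moreover have "j \<in> {x,y,z}" "k \<in> {x,y,z}" "l \<in> {x,y,z}" using h by auto
  ultimately show "(j,k,l) \<in> {(x,y,z),(x,z,y),(y,x,z),(y,z,x),(z,x,y),(z,y,x)}" using assms by auto
qed (auto simp: insert_commute)

lemma card6:
  assumes "x \<noteq> y" "x \<noteq> z" "y \<noteq> z"
  shows "card {(x,y,z),(x,z,y),(y,x,z),(y,z,x),(z,x,y),(z,y,x)} = 6"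
  using assms by auto

lemma six_sum:
  fixes g :: "nat \<Rightarrow> nat \<Rightarrow> nat \<Rightarrow> real"
  assumes d: "x \<noteq> y" "x \<noteq> z" "y \<noteq> z" and lt: "x < n" "y < n" "z < n"
    and g: "\<And>j k l. {j,k,l} = {x,y,z} \<Longrightarrow> g j k l = G"
  shows "(\<Sum>j<n. \<Sum>k<n. \<Sum>l<n. if {j,k,l} = {x,y,z} then g j k l else 0) = 6 * G"
proof -
  let ?P = "{(x,y,z),(x,z,y),(y,x,z),(y,z,x),(z,x,y),(z,y,x)}"
  let ?C = "{..<n} \<times> {..<n} \<times> {..<n}"
  have "(\<Sum>j<n. \<Sum>k<n. \<Sum>l<n. if {j,k,l} = {x,y,z} then g j k l else 0)
      = (\<Sum>j<n. \<Sum>(k,l)\<in>{..<n}\<times>{..<n}. if {j,k,l} = {x,y,z} then g j k l else 0)"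
    by (intro sum.cong refl) (rule sum.cartesian_product)
  also have "\<dots> = (\<Sum>(j,k,l)\<in>?C. if {j,k,l} = {x,y,z} then g j k l else 0)"
    by (subst sum.cartesian_product) (simp add: case_prod_beta)
  also have "\<dots> = (\<Sum>\<tau>\<in>?C. if \<tau> \<in> ?P then G else 0)"
  proof (intro sum.cong refl)
    fix \<tau> assume "\<tau> \<in> ?C"
    obtain j k l where \<tau>: "\<tau> = (j,k,l)" by (cases \<tau>) auto
    show "(case \<tau> of (j,k,l) \<Rightarrow> if {j,k,l} = {x,y,z} then g j k l else 0) = (if \<tau> \<in> ?P then G else 0)"
      unfolding \<tau> using set3_iff[OF d, of j k l] g[of j k l] by auto
  qed
  also have "\<dots> = (\<Sum>\<tau>\<in>?C \<inter> ?P. G)" by (rule sum.inter_restrict[symmetric]) simp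
  also have "?C \<inter> ?P = ?P" by (rule Int_absorb1) (use lt in simp)
  also have "(\<Sum>\<tau>\<in>?P. G) = 6 * G" using card6[OF d] by simp
  finally show ?thesis .
qed

lemma sum_swap3:
  fixes f :: "nat \<Rightarrow> nat \<Rightarrow> nat \<Rightarrow> 'e \<Rightarrow> real"
  shows "(\<Sum>j\<in>A. \<Sum>k\<in>B. \<Sum>l\<in>C. \<Sum>e\<in>E. f j k l e) = (\<Sum>e\<in>E. \<Sum>j\<in>A. \<Sum>k\<in>B. \<Sum>l\<in>C. f j k l e)"
proof -
  have "(\<Sum>j\<in>A. \<Sum>k\<in>B. \<Sum>l\<in>C. \<Sum>e\<in>E. f j k l e) = (\<Sum>j\<in>A. \<Sum>k\<in>B. \<Sum>e\<in>E. \<Sum>l\<in>C. f j k l e)"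
    by (intro sum.cong refl) (rule sum.swap)
  also have "\<dots> = (\<Sum>j\<in>A. \<Sum>e\<in>E. \<Sum>k\<in>B. \<Sum>l\<in>C. f j k l e)"
    by (intro sum.cong refl) (rule sum.swap)
  also have "\<dots> = (\<Sum>e\<in>E. \<Sum>j\<in>A. \<Sum>k\<in>B. \<Sum>l\<in>C. f j k l e)"
    by (rule sum.swap)
  finally show ?thesis .
qed

lemma S1_value:
  assumes p: "1 \<le> p" and n: "4*p \<le> n" and \<sigma>: "\<And>e. e \<in> {..<p}\<times>{..<p} \<Longrightarrow> \<sigma> e \<in> {-1,1}"
  shows "(\<Sum>j<n. \<Sum>k<n. \<Sum>l<n. Tq (dd p \<sigma> s) (4*p-1) j k l * tt p \<sigma> j k l) = real (p*p) / (4 * s)"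
proof -
  let ?I = "{..<p}\<times>{..<p}"
  let ?T = "Tq (dd p \<sigma> s) (4*p-1)"
  have "(\<Sum>j<n. \<Sum>k<n. \<Sum>l<n. ?T j k l * tt p \<sigma> j k l)
      = (\<Sum>j<n. \<Sum>k<n. \<Sum>l<n. \<Sum>e\<in>?I. if {j,k,l} = trip p e then \<sigma> e * ?T j k l else 0)"
    unfolding tt_def sum_distrib_left by (intro sum.cong refl) (simp only: mult_if_helper)
  also have "\<dots> = (\<Sum>e\<in>?I. \<Sum>j<n. \<Sum>k<n. \<Sum>l<n. if {j,k,l} = trip p e then \<sigma> e * ?T j k l else 0)"
    by (rule sum_swap3)
  also have "\<dots> = (\<Sum>e\<in>?I. 6 * (\<sigma> e * (\<sigma> e / s / 24)))"
  proof (intro sum.cong refl)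
    fix e assume e: "e \<in> ?I"
    obtain a b where ab: "e = (a,b)" "a < p" "b < p" using e by auto
    have tr: "trip p e = {a, p+b, 2*p+a+b}" using ab by (simp add: trip_def)
    have d: "a \<noteq> p+b" "a \<noteq> 2*p+a+b" "p+b \<noteq> 2*p+a+b" using ab by auto
    have lt: "a < n" "p+b < n" "2*p+a+b < n" using ab n by auto
    have Tv: "?T a (p+b) (2*p+a+b) = \<sigma> e / s / 24" using Tq_dd[OF e, of \<sigma> s] ab by simp
    show "(\<Sum>j<n. \<Sum>k<n. \<Sum>l<n. if {j,k,l} = trip p e then \<sigma> e * ?T j k l else 0) = 6 * (\<sigma> e * (\<sigma> e / s / 24))"
      unfolding tr
    proof (rule six_sum[OF d lt])
      fix j k l assume h: "{j,k,l} = {a, p+b, 2*p+a+b}"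
      have "(j,k,l) \<in> {(a, p+b, 2*p+a+b),(a,2*p+a+b,p+b),(p+b,a,2*p+a+b),(p+b,2*p+a+b,a),(2*p+a+b,a,p+b),(2*p+a+b,p+b,a)}"
        by (rule iffD1[OF set3_iff[OF d] h])
      hence "(j,k,l) = (a, p+b, 2*p+a+b) \<or> (j,k,l) = (a,2*p+a+b,p+b) \<or> (j,k,l) = (p+b,a,2*p+a+b) \<or>
         (j,k,l) = (p+b,2*p+a+b,a) \<or> (j,k,l) = (2*p+a+b,a,p+b) \<or> (j,k,l) = (2*p+a+b,p+b,a)"
        by (simp only: insert_iff empty_iff simp_thms)
      hence "mset [4*p-1,j,k,l] = mset [4*p-1,a,p+b,2*p+a+b]"
        by (elim disjE; simp add: add_mset_commute)
      hence "?T j k l = ?T a (p+b) (2*p+a+b)" by (rule Tq_mset)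
      thus "\<sigma> e * ?T j k l = \<sigma> e * (\<sigma> e / s / 24)" using Tv by simp
    qed
  qed
  also have "\<dots> = (\<Sum>e\<in>?I. 1 / (4 * s))"
  proof (intro sum.cong refl)
    fix e assume "e \<in> ?I"
    hence "\<sigma> e * \<sigma> e = 1" using \<sigma>[of e] by auto
    thus "6 * (\<sigma> e * (\<sigma> e / s / 24)) = 1 / (4 * s)" by (simp add: field_simps)
  qed
  also have "\<dots> = real (p*p) / (4 * s)" by simp
  finally show ?thesis .
qed

lemma red_i:
  fixes F :: "nat \<Rightarrow> nat \<Rightarrow> nat \<Rightarrow> nat \<Rightarrow> real"
  assumes w: "w < n"
  shows "(\<Sum>i<n. \<Sum>j<n. \<Sum>k<n. \<Sum>l<n. F i j k l * (if i = w then H j k l else 0))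
       = (\<Sum>j<n. \<Sum>k<n. \<Sum>l<n. F w j k l * H j k l)"
proof -
  have "(\<Sum>j<n. \<Sum>k<n. \<Sum>l<n. F i j k l * (if i = w then H j k l else 0))
      = (if i = w then (\<Sum>j<n. \<Sum>k<n. \<Sum>l<n. F w j k l * H j k l) else 0)" for i
    by (cases "i = w") simp_all
  thus ?thesis using w by simp
qed

lemma red_j:
  fixes F :: "nat \<Rightarrow> nat \<Rightarrow> nat \<Rightarrow> nat \<Rightarrow> real"
  assumes w: "w < n"
  shows "(\<Sum>i<n. \<Sum>j<n. \<Sum>k<n. \<Sum>l<n. F i j k l * (if j = w then H i k l else 0))
       = (\<Sum>i<n. \<Sum>k<n. \<Sum>l<n. F i w k l * H i k l)"
proof -
  have "(\<Sum>k<n. \<Sum>l<n. F i j k l * (if j = w then H i k l else 0))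
      = (if j = w then (\<Sum>k<n. \<Sum>l<n. F i w k l * H i k l) else 0)" for i j
    by (cases "j = w") simp_all
  thus ?thesis using w by simp
qed

lemma red_k:
  fixes F :: "nat \<Rightarrow> nat \<Rightarrow> nat \<Rightarrow> nat \<Rightarrow> real"
  assumes w: "w < n"
  shows "(\<Sum>i<n. \<Sum>j<n. \<Sum>k<n. \<Sum>l<n. F i j k l * (if k = w then H i j l else 0))
       = (\<Sum>i<n. \<Sum>j<n. \<Sum>l<n. F i j w l * H i j l)"
proof -
  have "(\<Sum>l<n. F i j k l * (if k = w then H i j l else 0))
      = (if k = w then (\<Sum>l<n. F i j w l * H i j l) else 0)" for i j k
    by (cases "k = w") simp_all
  thus ?thesis using w by simp
qed

lemma red_l:
  fixes F :: "nat \<Rightarrow> nat \<Rightarrow> nat \<Rightarrow> nat \<Rightarrow> real"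
  assumes w: "w < n"
  shows "(\<Sum>i<n. \<Sum>j<n. \<Sum>k<n. \<Sum>l<n. F i j k l * (if l = w then H i j k else 0))
       = (\<Sum>i<n. \<Sum>j<n. \<Sum>k<n. F i j k w * H i j k)"
proof -
  have "(\<Sum>l<n. F i j k l * (if l = w then H i j k else 0)) = F i j k w * H i j k" for i j k
    using w by (simp add: mult_if_helper)
  thus ?thesis by simp
qed

lemma prod_entry:
  assumes i: "i < n" and j: "j < n" and k: "k < n" and l: "l < n"
  shows "(Aop n w t i * Aop n w t j * Aop n w t k * Aop n w t l) $$ (2*n+1, 0)
    = (Aop n w t i *\<^sub>v (Aop n w t j *\<^sub>v (Aop n w t k *\<^sub>v (Aop n w t l *\<^sub>v unit_vec (2*n+2) 0)))) $ (2*n+1)"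
proof -
  let ?N = "2*n+2"
  have c: "Aop n w t m \<in> carrier_mat ?N ?N" for m by simp
  have m4: "Aop n w t i * Aop n w t j * Aop n w t k * Aop n w t l \<in> carrier_mat ?N ?N"
    by (rule mult_carrier_mat[OF mult_carrier_mat[OF mult_carrier_mat[OF c c] c] c])
  have "(Aop n w t i * Aop n w t j * Aop n w t k * Aop n w t l) $$ (2*n+1, 0)
     = ((Aop n w t i * Aop n w t j * Aop n w t k * Aop n w t l) *\<^sub>v unit_vec ?N 0) $ (2*n+1)"
    by (rule mat_entry_unit[OF m4]) auto
  also have "(Aop n w t i * Aop n w t j * Aop n w t k * Aop n w t l) *\<^sub>v unit_vec ?N 0
     = Aop n w t i *\<^sub>v (Aop n w t j *\<^sub>v (Aop n w t k *\<^sub>v (Aop n w t l *\<^sub>v unit_vec ?N 0)))"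
  proof -
    have e: "unit_vec ?N 0 \<in> carrier_vec ?N" by simp
    have m2: "Aop n w t i * Aop n w t j \<in> carrier_mat ?N ?N" by (rule mult_carrier_mat[OF c c])
    have m3: "Aop n w t i * Aop n w t j * Aop n w t k \<in> carrier_mat ?N ?N" by (rule mult_carrier_mat[OF m2 c])
    have v1: "Aop n w t l *\<^sub>v unit_vec ?N 0 \<in> carrier_vec ?N" by (rule mult_mat_vec_carrier[OF c e])
    have v2: "Aop n w t k *\<^sub>v (Aop n w t l *\<^sub>v unit_vec ?N 0) \<in> carrier_vec ?N" by (rule mult_mat_vec_carrier[OF c v1])
    have "(Aop n w t i * Aop n w t j * Aop n w t k * Aop n w t l) *\<^sub>v unit_vec ?N 0
        = (Aop n w t i * Aop n w t j * Aop n w t k) *\<^sub>v (Aop n w t l *\<^sub>v unit_vec ?N 0)"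
      by (rule assoc_mult_mat_vec[OF m3 c e])
    also have "\<dots> = (Aop n w t i * Aop n w t j) *\<^sub>v (Aop n w t k *\<^sub>v (Aop n w t l *\<^sub>v unit_vec ?N 0))"
      by (rule assoc_mult_mat_vec[OF m2 c v1])
    also have "\<dots> = Aop n w t i *\<^sub>v (Aop n w t j *\<^sub>v (Aop n w t k *\<^sub>v (Aop n w t l *\<^sub>v unit_vec ?N 0)))"
      by (rule assoc_mult_mat_vec[OF c c v2])
    finally show ?thesis .
  qed
  finally show ?thesis .
qed

lemma TE_entry:
  assumes p: "1 \<le> p" and n: "4*p \<le> n" and \<sigma>: "\<And>e. e \<in> {..<p}\<times>{..<p} \<Longrightarrow> \<sigma> e \<in> {-1,1}"
  shows "tensor_eval (2*n+2) n (dd p \<sigma> s) (Aop n (4*p-1) (tt p \<sigma>)) $$ (2*n+1, 0) = real (p*p) / s"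
proof -
  let ?w = "4*p-1"
  let ?t = "tt p \<sigma>"
  let ?T = "Tq (dd p \<sigma> s)"
  let ?A = "Aop n ?w ?t"
  have w: "?w < n" using p n by simp
  have t: "tgood ?t" by (rule tt_good[OF \<sigma>])
  have tw: "\<And>b c. ?t ?w b c = 0" using tt_w[OF p] by simp
  have "tensor_eval (2*n+2) n (dd p \<sigma> s) ?A $$ (2*n+1, 0)
     = (\<Sum>i<n. \<Sum>j<n. \<Sum>k<n. \<Sum>l<n. ?T i j k l * ((?A i * ?A j * ?A k * ?A l) $$ (2*n+1, 0)))"
    unfolding tensor_eval_def by simp
  also have "\<dots> = (\<Sum>i<n. \<Sum>j<n. \<Sum>k<n. \<Sum>l<n. ?T i j k l * (if i = ?w then ?t j k l else 0)
      + ?T i j k l * (if j = ?w then ?t i k l else 0) + ?T i j k l * (if k = ?w then ?t i j l else 0)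
      + ?T i j k l * (if l = ?w then ?t i j k else 0))"
  proof -
    have pe: "\<And>i j k l. i < n \<Longrightarrow> j < n \<Longrightarrow> k < n \<Longrightarrow> l < n \<Longrightarrow>
      (?A i * ?A j * ?A k * ?A l) $$ (2*n+1, 0) = (if i = ?w then ?t j k l else 0) + (if j = ?w then ?t i k l else 0)
      + (if k = ?w then ?t i j l else 0) + (if l = ?w then ?t i j k else 0)"
      by (subst prod_entry) (simp_all only: E_formula[OF t tw])
    show ?thesis by (intro sum.cong refl) (simp only: pe lessThan_iff distrib_left)
  qed
  also have "\<dots> = (\<Sum>i<n. \<Sum>j<n. \<Sum>k<n. \<Sum>l<n. ?T i j k l * (if i = ?w then ?t j k l else 0))
      + (\<Sum>i<n. \<Sum>j<n. \<Sum>k<n. \<Sum>l<n. ?T i j k l * (if j = ?w then ?t i k l else 0))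
      + (\<Sum>i<n. \<Sum>j<n. \<Sum>k<n. \<Sum>l<n. ?T i j k l * (if k = ?w then ?t i j l else 0))
      + (\<Sum>i<n. \<Sum>j<n. \<Sum>k<n. \<Sum>l<n. ?T i j k l * (if l = ?w then ?t i j k else 0))"
    by (simp add: sum.distrib)
  also have "\<dots> = 4 * (\<Sum>j<n. \<Sum>k<n. \<Sum>l<n. ?T ?w j k l * ?t j k l)"
  proof -
    have s2: "?T i ?w k l = ?T ?w i k l" for i k l by (rule Tq_mset) (simp add: add_mset_commute)
    have s3: "?T i j ?w l = ?T ?w i j l" for i j l by (rule Tq_mset) (simp add: add_mset_commute)
    have s4: "?T i j k ?w = ?T ?w i j k" for i j k by (rule Tq_mset) (simp add: add_mset_commute)
    show ?thesis
      unfolding red_i[OF w] red_j[OF w] red_k[OF w] red_l[OF w] s2 s3 s4 by simp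
  qed
  also have "\<dots> = real (p*p) / s"
    using S1_value[OF p n \<sigma>, where s=s] by simp
  finally show ?thesis .
qed

lemma sign3: "a \<in> {-1,1::real} \<Longrightarrow> b \<in> {-1,1} \<Longrightarrow> c \<in> {-1,1} \<Longrightarrow> a * b * c \<in> {-1,1}"
  by auto

lemma sigma_exists:
  assumes p: "9 \<le> p"
  shows "\<exists>\<sigma>. (\<forall>e\<in>{..<p}\<times>{..<p}. \<sigma> e \<in> {-1,1::real}) \<and>
    (\<forall>y\<in>PiE {..<4*p} (\<lambda>_. {-1,1::real}).
       \<bar>\<Sum>e\<in>{..<p}\<times>{..<p}. \<sigma> e * (y (fst e) * y (p + snd e) * y (2*p + fst e + snd e))\<bar> \<le> 6 * real p * sqrt (real p))"
proof -
  let ?I = "{..<p}\<times>{..<p}"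
  let ?Y = "PiE {..<4*p} (\<lambda>_. {-1,1::real})"
  let ?c = "\<lambda>y e. y (fst e) * y (p + snd e) * y (2*p + fst e + snd e)"
  define l where "l = 3 / sqrt (real p)"
  define s where "s = 6 * real p * sqrt (real p)"
  have sp: "3 \<le> sqrt (real p)"
  proof -
    have "sqrt 9 \<le> sqrt (real p)" using p by (intro real_sqrt_le_mono) simp
    thus ?thesis by simp
  qed
  have sq: "sqrt (real p) * sqrt (real p) = real p" by simp
  have c: "?c y e \<in> {-1,1}" if yY: "y \<in> ?Y" and eI: "e \<in> ?I" for y e
  proof -
    obtain a b where ab: "e = (a,b)" "a < p" "b < p" using eI by auto
    show ?thesis using yY ab by (intro sign3) (auto simp: PiE_iff)
  qed
  have l0: "0 \<le> l" unfolding l_def by simp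
  have sp0: "0 < sqrt (real p)" using sp by linarith
  have l1: "l \<le> 1" unfolding l_def using sp sp0 by (simp add: pos_divide_le_eq)
  have cY: "card ?Y = 2 ^ (4*p)" by (simp add: card_PiE numeral_2_eq_2)
  have cI: "card ?I = p * p" by (simp add: card_cartesian_product)
  have ex: "real (card ?I) * l^2 - l * s = - 9 * real p"
    unfolding cI l_def s_def using sp sq by (simp add: field_simps power2_eq_square)
  have "real (card ?Y) * (2 * exp (real (card ?I) * l^2 - l * s)) = 2 ^ (4*p+1) * exp (- (9 * real p))"
    unfolding ex cY by simp
  also have "\<dots> < 1"
  proof -
    have "(2::real) ^ (4*p+1) < 2 ^ (9*p)" using p by (intro power_strict_increasing) auto
    also have "(2::real) ^ (9*p) \<le> exp 1 ^ (9*p)"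
      using exp_ge_add_one_self[of 1] by (intro power_mono) auto
    also have "exp 1 ^ (9*p) = exp (9 * real p)" by (simp add: exp_of_nat_mult[symmetric])
    finally have "(2::real) ^ (4*p+1) < exp (9 * real p)" .
    thus ?thesis by (simp add: exp_minus field_simps)
  qed
  finally have small: "real (card ?Y) * (2 * exp (real (card ?I) * l^2 - l * s)) < 1" .
  have fI: "finite ?I" by simp
  have fY: "finite ?Y" by (intro finite_PiE) auto
  have ex: "\<exists>\<sigma>\<in>PiE ?I (\<lambda>_. {-1,1::real}). \<forall>y\<in>?Y. \<bar>\<Sum>e\<in>?I. \<sigma> e * ?c y e\<bar> \<le> s"
    by (rule chernoff_union[OF fI fY c l0 l1 small])
  then obtain \<sigma> where \<sigma>: "\<sigma> \<in> PiE ?I (\<lambda>_. {-1,1::real})" "\<forall>y\<in>?Y. \<bar>\<Sum>e\<in>?I. \<sigma> e * ?c y e\<bar> \<le> s"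
    by (rule bexE)
  show ?thesis
    by (rule exI[of _ \<sigma>]) (use \<sigma> in \<open>auto simp: s_def PiE_iff\<close>)
qed

lemma opnorm_entry:
  fixes M :: "real mat"
  assumes M: "M \<in> carrier_mat N N" and r: "r < N" and s: "s < N"
  shows "\<bar>M $$ (r,s)\<bar> \<le> mat_op_norm M"
proof -
  let ?e = "unit_vec N s :: real vec"
  have en: "eucl_vnorm ?e = 1"
  proof -
    have "(\<Sum>i<N. (?e $ i)^2) = (\<Sum>i<N. if i = s then 1 else 0)"
      using s by (intro sum.cong refl) simp
    also have "\<dots> = 1" using s by simp
    finally show ?thesis unfolding eucl_vnorm_def by simp
  qed
  have "\<bar>M $$ (r,s)\<bar> = \<bar>(M *\<^sub>v ?e) $ r\<bar>" using mat_entry_unit[OF M r s] by simp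
  also have "\<dots> \<le> eucl_vnorm (M *\<^sub>v ?e)" using M r by (intro evnorm_comp) simp
  also have "\<dots> \<le> mat_op_norm M" using M en by (intro opnorm_ge_vec) auto
  finally show ?thesis .
qed

theorem corollary4p5:
  shows "\<exists>c::real. 0 < c \<and> c \<le> 1 \<and>
    (\<exists>N0::nat. \<forall>n\<ge>N0. n > 0 \<longrightarrow>
      (\<exists>(d :: (nat \<Rightarrow> nat) \<Rightarrow> real) (A :: nat \<Rightarrow> real mat).
         (\<forall>\<alpha>. \<alpha> \<notin> ml_quartic_exps n \<longrightarrow> d \<alpha> = 0) \<and>
         (\<forall>x. (\<forall>m<n. x m = 1 \<or> x m = -1) \<longrightarrow> \<bar>qform n d x\<bar> \<le> 1) \<and>
         (\<forall>i<n. A i \<in> carrier_mat (2*n+2) (2*n+2) \<and> mat_op_norm (A i) \<le> 1) \<and>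
         (\<forall>i<n. \<forall>j<n. A i * A j = A j * A i) \<and>
         mat_op_norm (tensor_eval (2*n+2) n d A) \<ge> c * sqrt (real n)))"
proof (intro exI[of _ "1/17::real"] conjI)
  show "0 < (1/17::real)" by simp
  show "(1/17::real) \<le> 1" by simp
  show "\<exists>N0::nat. \<forall>n\<ge>N0. n > 0 \<longrightarrow>
      (\<exists>(d :: (nat \<Rightarrow> nat) \<Rightarrow> real) (A :: nat \<Rightarrow> real mat).
         (\<forall>\<alpha>. \<alpha> \<notin> ml_quartic_exps n \<longrightarrow> d \<alpha> = 0) \<and>
         (\<forall>x. (\<forall>m<n. x m = 1 \<or> x m = -1) \<longrightarrow> \<bar>qform n d x\<bar> \<le> 1) \<and>
         (\<forall>i<n. A i \<in> carrier_mat (2*n+2) (2*n+2) \<and> mat_op_norm (A i) \<le> 1) \<and>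
         (\<forall>i<n. \<forall>j<n. A i * A j = A j * A i) \<and>
         mat_op_norm (tensor_eval (2*n+2) n d A) \<ge> 1/17 * sqrt (real n))"
  proof (intro exI[of _ "36::nat"] allI impI)
    fix n :: nat assume n36: "36 \<le> n" and "0 < n"
    define p where "p = n div 4"
    have p9: "9 \<le> p" using n36 unfolding p_def by simp
    have pn: "4*p \<le> n" unfolding p_def by simp
    have p1: "1 \<le> p" using p9 by simp
    have np: "36 * n \<le> 289 * p"
    proof -
      have "n = 4 * p + n mod 4" unfolding p_def by simp
      moreover have "n mod 4 < 4" by simp
      ultimately show ?thesis using p9 by linarith
    qed
    let ?I = "{..<p}\<times>{..<p}"
    let ?c = "\<lambda>(y::nat \<Rightarrow> real) e. y (fst e) * y (p + snd e) * y (2*p + fst e + snd e)"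
    obtain \<sigma> where \<sigma>1: "\<forall>e\<in>?I. \<sigma> e \<in> {-1,1::real}"
      and \<sigma>2: "\<forall>y\<in>PiE {..<4*p} (\<lambda>_. {-1,1::real}). \<bar>\<Sum>e\<in>?I. \<sigma> e * ?c y e\<bar> \<le> 6 * real p * sqrt (real p)"
      using sigma_exists[OF p9] by (elim exE conjE)
    have \<sigma>: "\<And>e. e \<in> ?I \<Longrightarrow> \<sigma> e \<in> {-1,1}" using \<sigma>1 by blast
    define s where "s = 6 * real p * sqrt (real p)"
    have sp: "0 < sqrt (real p)" using p1 by simp
    have s0: "0 < s" unfolding s_def using p1 sp by simp
    define d where "d = dd p \<sigma> s"
    define A where "A = Aop n (4*p-1) (tt p \<sigma>)"
    have t: "tgood (tt p \<sigma>)" by (rule tt_good[OF \<sigma>])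
    show "\<exists>(d :: (nat \<Rightarrow> nat) \<Rightarrow> real) (A :: nat \<Rightarrow> real mat).
         (\<forall>\<alpha>. \<alpha> \<notin> ml_quartic_exps n \<longrightarrow> d \<alpha> = 0) \<and>
         (\<forall>x. (\<forall>m<n. x m = 1 \<or> x m = -1) \<longrightarrow> \<bar>qform n d x\<bar> \<le> 1) \<and>
         (\<forall>i<n. A i \<in> carrier_mat (2*n+2) (2*n+2) \<and> mat_op_norm (A i) \<le> 1) \<and>
         (\<forall>i<n. \<forall>j<n. A i * A j = A j * A i) \<and>
         mat_op_norm (tensor_eval (2*n+2) n d A) \<ge> 1/17 * sqrt (real n)"
    proof (intro exI[of _ d] exI[of _ A] conjI)
      show "\<forall>\<alpha>. \<alpha> \<notin> ml_quartic_exps n \<longrightarrow> d \<alpha> = 0"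
        using dd_out[OF pn] by (simp add: d_def)
      show "\<forall>x. (\<forall>m<n. x m = 1 \<or> x m = -1) \<longrightarrow> \<bar>qform n d x\<bar> \<le> 1"
      proof (intro allI impI)
        fix x :: "nat \<Rightarrow> real" assume hx: "\<forall>m<n. x m = 1 \<or> x m = -1"
        let ?y = "restrict x {..<4*p}"
        have hx4: "\<forall>m<4*p. x m = 1 \<or> x m = -1" using hx pn by simp
        have yY: "?y \<in> PiE {..<4*p} (\<lambda>_. {-1,1::real})" using hx4 by (auto simp: PiE_iff)
        have q: "qform n d x = x (4*p-1) / s * (\<Sum>e\<in>?I. \<sigma> e * ?c ?y e)"
          unfolding d_def qform_dd[OF pn] sum_distrib_left
        proof (intro sum.cong refl)
          fix e assume e: "e \<in> ?I"
          obtain a b where ab: "e = (a,b)" "a < p" "b < p" using e by auto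
          have lt: "a < 4*p" "p + b < 4*p" "2*p+a+b < 4*p" using ab by auto
          show "\<sigma> e / s * prod_list (map x (cntl p e)) = x (4*p-1) / s * (\<sigma> e * ?c ?y e)"
            using ab lt by (simp add: cntl_def)
        qed
        have wn: "4*p-1 < n" using pn p1 by simp
        have "x (4*p-1) = 1 \<or> x (4*p-1) = -1" using hx wn by blast
        hence xw: "\<bar>x (4*p-1)\<bar> = 1" by auto
        have bnd: "\<bar>\<Sum>e\<in>?I. \<sigma> e * ?c ?y e\<bar> \<le> s" using \<sigma>2 yY unfolding s_def by blast
        have "\<bar>qform n d x\<bar> = 1 / s * \<bar>\<Sum>e\<in>?I. \<sigma> e * ?c ?y e\<bar>"
          unfolding q using s0 xw by (simp add: abs_mult)
        also have "\<dots> \<le> 1 / s * s"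
          using bnd s0 by (intro mult_left_mono) auto
        also have "\<dots> = 1" using s0 by simp
        finally show "\<bar>qform n d x\<bar> \<le> 1" .
      qed
      show "\<forall>i<n. A i \<in> carrier_mat (2*n+2) (2*n+2) \<and> mat_op_norm (A i) \<le> 1"
        unfolding A_def using Aop_norm[OF t] by simp
      show "\<forall>i<n. \<forall>j<n. A i * A j = A j * A i"
        unfolding A_def using Aop_comm[OF t] by blast
      have r: "real (p*p) / s = sqrt (real p) / 6"
        unfolding s_def using sp by (simp add: field_simps)
      have ent0: "tensor_eval (2*n+2) n d A $$ (2*n+1, 0) = real (p*p) / s"
        unfolding d_def A_def by (rule TE_entry[OF p1 pn \<sigma>])
      have ent: "tensor_eval (2*n+2) n d A $$ (2*n+1, 0) = sqrt (real p) / 6"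
        using ent0 r by simp
      have "1/17 * sqrt (real n) \<le> sqrt (real p) / 6"
      proof -
        have "sqrt (36 * real n) \<le> sqrt (289 * real p)"
          using np by (intro real_sqrt_le_mono) (simp only: of_nat_mult[symmetric] of_nat_le_iff of_nat_numeral)
        moreover have "sqrt (36 * real n) = 6 * sqrt (real n)" by (simp add: real_sqrt_mult)
        moreover have "sqrt (289 * real p) = 17 * sqrt (real p)" by (simp add: real_sqrt_mult)
        ultimately show ?thesis by simp
      qed
      also have "sqrt (real p) / 6 \<le> \<bar>tensor_eval (2*n+2) n d A $$ (2*n+1, 0)\<bar>" using ent by simp
      also have "\<dots> \<le> mat_op_norm (tensor_eval (2*n+2) n d A)"
        by (rule opnorm_entry[of _ "2*n+2"]) (simp_all add: tensor_eval_def)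
      finally show "mat_op_norm (tensor_eval (2*n+2) n d A) \<ge> 1/17 * sqrt (real n)" .
    qed
  qed
qed

end
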